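(* Every almost zero-dimensional space that is rim-$\sigma$C is zero-dimensional.
   Context: All spaces are separable and metrizable. A subset $A$ of $X$ is a C-set in $X$ if it is an intersection of clopen subsets of $X$; a $\sigma$C-set is a countable union of C-sets. $X$ is almost zero-dimensional if every point has a neighborhood basis consisting of C-sets in $X$. For a property P, $X$ is rim-P if $X$ has a basis of open sets whose boundaries have property P; rim-$\sigma$C means the boundaries are $\sigma$C-sets in $X$. *)

theory Defs
  imports "HOL-Analysis.Analysis"
begin

text \<open>A C-set in X: an intersection of clopen subsets of X (the empty intersection being
  the whole space).\<close>
definition C_set :: "'a topology \<Rightarrow> 'a set \<Rightarrow> bool" where
  "C_set X A \<longleftrightarrow>
     (\<exists>\<U>. (\<forall>U\<in>\<U>. closedin X U \<and> openin X U) \<and> A = topspace X \<inter> \<Inter>\<U>)"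

definition sigmaC_set :: "'a topology \<Rightarrow> 'a set \<Rightarrow> bool" where
  "sigmaC_set X A \<longleftrightarrow> (\<exists>F :: nat \<Rightarrow> 'a set. (\<forall>n. C_set X (F n)) \<and> A = (\<Union>n. F n))"

definition almost_zero_dimensional :: "'a topology \<Rightarrow> bool" where
  "almost_zero_dimensional X \<longleftrightarrow> neighbourhood_base_of (C_set X) X"

definition rim_sigmaC :: "'a topology \<Rightarrow> bool" where
  "rim_sigmaC X \<longleftrightarrow>
     (\<exists>\<B>. (\<forall>B\<in>\<B>. openin X B \<and> sigmaC_set X (X frontier_of B)) \<and>
          (\<forall>U. openin X U \<longrightarrow> (\<exists>\<V>. \<V> \<subseteq> \<B> \<and> \<Union>\<V> = U)))"

end

theory Submission
  imports Defs
begin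

definition hL :: "'a topology \<Rightarrow> bool" where
  "hL X \<longleftrightarrow> (\<forall>S \<U>. (\<forall>U\<in>\<U>. openin X U) \<and> S \<subseteq> \<Union>\<U> \<longrightarrow>
      (\<exists>\<V>. countable \<V> \<and> \<V> \<subseteq> \<U> \<and> S \<subseteq> \<Union>\<V>))"

lemma (in Metric_space) hL_mtopology:
  assumes "countable C" "C \<subseteq> M" "mtopology closure_of C = M"
  shows "hL mtopology"
  unfolding hL_def
proof (intro allI impI)
  fix S \<U>
  assume a: "(\<forall>U\<in>\<U>. openin mtopology U) \<and> S \<subseteq> \<Union>\<U>"
  define P where "P = {(c,n). c \<in> C \<and> (\<exists>U\<in>\<U>. mball c (1 / real (Suc n)) \<subseteq> U)}"
  define f where "f = (\<lambda>(c,n). SOME U. U \<in> \<U> \<and> mball c (1 / real (Suc n)) \<subseteq> U)"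
  have fP: "f p \<in> \<U> \<and> mball (fst p) (1 / real (Suc (snd p))) \<subseteq> f p" if "p \<in> P" for p
  proof -
    obtain c n where p: "p = (c,n)" by (cases p)
    have "\<exists>U. U \<in> \<U> \<and> mball c (1 / real (Suc n)) \<subseteq> U"
      using that unfolding p P_def by auto
    from someI_ex[OF this] show ?thesis unfolding p f_def by simp
  qed
  have cP: "countable P"
  proof -
    have "P \<subseteq> C \<times> UNIV" by (auto simp: P_def)
    moreover have "countable (C \<times> (UNIV::nat set))" using assms(1) by simp
    ultimately show ?thesis by (rule countable_subset)
  qed
  show "\<exists>\<V>. countable \<V> \<and> \<V> \<subseteq> \<U> \<and> S \<subseteq> \<Union>\<V>"
  proof (intro exI conjI)
    show "countable (f ` P)" using cP by simp
    show "f ` P \<subseteq> \<U>" using fP by auto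
    show "S \<subseteq> \<Union> (f ` P)"
    proof
      fix y assume yS: "y \<in> S"
      then obtain U where U: "U \<in> \<U>" "y \<in> U" using a by auto
      then have oU: "openin mtopology U" using a by auto
      then obtain r where r: "r > 0" "mball y r \<subseteq> U" using U openin_mtopology by blast
      have yM: "y \<in> M" using oU U openin_mtopology by auto
      obtain n where n: "1 / real (Suc n) < r / 2"
        using r(1) by (metis half_gt_zero nat_approx_posE)
      have pos: "(0::real) < 1 / real (Suc n)" by simp
      obtain c where c: "c \<in> C" "c \<in> mball y (1 / real (Suc n))"
        using assms(3) yM pos unfolding metric_closure_of by blast
      have sub: "mball c (1 / real (Suc n)) \<subseteq> mball y r"
      proof
        fix z assume z: "z \<in> mball c (1 / real (Suc n))"
        have z1: "z \<in> M" "d c z < 1 / real (Suc n)" using z by auto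
        have c1: "c \<in> M" "d y c < 1 / real (Suc n)" using c(2) by auto
        have "d y z \<le> d y c + d c z" using triangle[OF yM c1(1) z1(1)] .
        then have "d y z < r" using z1(2) c1(2) n by linarith
        then show "z \<in> mball y r" using z1(1) yM by simp
      qed
      have "\<exists>U\<in>\<U>. mball c (1 / real (Suc n)) \<subseteq> U" using sub r(2) U(1) by blast
      then have "(c,n) \<in> P" unfolding P_def using c(1) by simp
      moreover have "y \<in> mball c (1 / real (Suc n))"
      proof -
        have "c \<in> M" "d y c < 1 / real (Suc n)" using c(2) by auto
        moreover have "d c y = d y c" using commute by blast
        ultimately show ?thesis using yM by simp
      qed
      ultimately show "y \<in> \<Union> (f ` P)" using fP[of "(c,n)"] by auto
    qed
  qed
qed

lemma hL_metrizable:
  assumes "metrizable_space X" "separable_space X"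
  shows "hL X"
proof -
  obtain M d where md: "Metric_space M d" "X = Metric_space.mtopology M d"
    using assms(1) metrizable_space_def by blast
  obtain C where C: "countable C" "C \<subseteq> topspace X" "X closure_of C = topspace X"
    using assms(2) unfolding separable_space_def by blast
  interpret Metric_space M d by (rule md(1))
  have c2: "C \<subseteq> M" using C(2) unfolding md(2) by simp
  have c3: "mtopology closure_of C = M" using C(3) unfolding md(2) by simp
  show ?thesis unfolding md(2) by (rule hL_mtopology[OF C(1) c2 c3])
qed


lemma hL_seq:
  assumes "hL X" "\<forall>U\<in>\<U>. openin X U" "S \<subseteq> \<Union>\<U>" "S \<noteq> {}"
  shows "\<exists>q::nat \<Rightarrow> 'a set. (\<forall>n. q n \<in> \<U>) \<and> S \<subseteq> (\<Union>n. q n)"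
proof -
  have "\<forall>S \<U>. (\<forall>U\<in>\<U>. openin X U) \<and> S \<subseteq> \<Union>\<U> \<longrightarrow>
      (\<exists>\<V>. countable \<V> \<and> \<V> \<subseteq> \<U> \<and> S \<subseteq> \<Union>\<V>)" using assms(1) unfolding hL_def .
  then have "(\<forall>U\<in>\<U>. openin X U) \<and> S \<subseteq> \<Union>\<U> \<longrightarrow>
      (\<exists>\<V>. countable \<V> \<and> \<V> \<subseteq> \<U> \<and> S \<subseteq> \<Union>\<V>)" by (rule allE[of _ S]) (rule allE[of _ \<U>])
  then obtain \<V> where V: "countable \<V>" "\<V> \<subseteq> \<U>" "S \<subseteq> \<Union>\<V>"
    using assms(2,3) by blast
  have ne: "\<V> \<noteq> {}" using V(3) assms(4) by auto
  have r: "range (from_nat_into \<V>) = \<V>" using range_from_nat_into[OF ne V(1)] .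
  show ?thesis
  proof (intro exI conjI)
    show "\<forall>n. from_nat_into \<V> n \<in> \<U>" using r V(2) by auto
    show "S \<subseteq> (\<Union>n. from_nat_into \<V> n)" using r V(3) by simp
  qed
qed

lemma clopen_avoid:
  assumes "C_set X G" "z \<in> topspace X" "z \<notin> G"
  shows "\<exists>Q. closedin X Q \<and> openin X Q \<and> z \<in> Q \<and> Q \<inter> G = {}"
proof -
  obtain \<U> where U: "\<forall>U\<in>\<U>. closedin X U \<and> openin X U" "G = topspace X \<inter> \<Inter>\<U>"
    using assms(1) unfolding C_set_def by blast
  then obtain U where "U \<in> \<U>" "z \<notin> U" using assms(2,3) by blast
  then show ?thesis
    using U by (intro exI[of _ "topspace X - U"]) (auto simp: assms(2))
qed

lemma C_set_subset: "C_set X G \<Longrightarrow> G \<subseteq> topspace X"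
  unfolding C_set_def by blast

lemma finite_Inter_clopen:
  assumes "finite I" "\<forall>i\<in>I. closedin X (Q i) \<and> openin X (Q i)"
  shows "closedin X (topspace X \<inter> \<Inter>(Q ` I)) \<and> openin X (topspace X \<inter> \<Inter>(Q ` I))"
  using assms
proof (induction I rule: finite_induct)
  case empty
  then show ?case by simp
next
  case (insert i I)
  have eq: "topspace X \<inter> \<Inter>(Q ` insert i I) = Q i \<inter> (topspace X \<inter> \<Inter>(Q ` I))" by auto
  show ?case unfolding eq using insert by (auto intro: closedin_Int openin_Int)
qed

lemma least_index_open:
  fixes q :: "nat \<Rightarrow> 'a set"
  assumes "\<forall>n. closedin X (q n) \<and> openin X (q n)" "\<forall>y\<in>topspace X. \<exists>n. y \<in> q n"
  shows "openin X {y\<in>topspace X. P (LEAST n. y \<in> q n)}"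
proof (subst openin_subopen, intro ballI)
  fix y assume y: "y \<in> {y\<in>topspace X. P (LEAST n. y \<in> q n)}"
  define m where "m = (LEAST n. y \<in> q n)"
  have "\<exists>n. y \<in> q n" using y assms(2) by blast
  then have ym: "y \<in> q m" unfolding m_def by (rule LeastI_ex)
  have yless: "\<forall>j<m. y \<notin> q j" unfolding m_def using not_less_Least by blast
  define N where "N = q m \<inter> (topspace X \<inter> \<Inter>((\<lambda>j. topspace X - q j) ` {..<m}))"
  have h: "closedin X (topspace X \<inter> \<Inter>((\<lambda>j. topspace X - q j) ` {..<m})) \<and>
        openin X (topspace X \<inter> \<Inter>((\<lambda>j. topspace X - q j) ` {..<m}))"
    using assms(1) by (intro finite_Inter_clopen) auto
  have oN: "openin X N" unfolding N_def using openin_Int[OF _ conjunct2[OF h]] assms(1) by blast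
  have "N \<subseteq> {y\<in>topspace X. P (LEAST n. y \<in> q n)}"
  proof
    fix z assume z: "z \<in> N"
    have zt: "z \<in> topspace X" using z unfolding N_def by blast
    have "(LEAST n. z \<in> q n) = m"
    proof (rule Least_equality)
      show "z \<in> q m" using z N_def by blast
      fix k assume zk: "z \<in> q k"
      show "m \<le> k"
      proof (rule ccontr)
        assume "\<not> m \<le> k"
        then have "k \<in> {..<m}" by simp
        then have "z \<in> topspace X - q k" using z unfolding N_def by blast
        then show False using zk by blast
      qed
    qed
    then show "z \<in> {y\<in>topspace X. P (LEAST n. y \<in> q n)}" using zt y m_def by simp
  qed
  moreover have "y \<in> N" unfolding N_def using ym yless y by auto
  ultimately show "\<exists>T. openin X T \<and> y \<in> T \<and> T \<subseteq> {y\<in>topspace X. P (LEAST n. y \<in> q n)}"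
    using oN by blast
qed

lemma sep_lemma:
  assumes "hL X" "C_set X F" "C_set X G" "F \<inter> G = {}"
  shows "\<exists>D. closedin X D \<and> openin X D \<and> F \<subseteq> D \<and> D \<inter> G = {}"
proof (cases "topspace X = {}")
  case True
  then show ?thesis using C_set_subset[OF assms(2)] by (intro exI[of _ "{}"]) auto
next
  case False
  define \<Q> where "\<Q> = {Q. closedin X Q \<and> openin X Q \<and> (Q \<inter> F = {} \<or> Q \<inter> G = {})}"
  have cov: "topspace X \<subseteq> \<Union>\<Q>"
  proof
    fix z assume z: "z \<in> topspace X"
    show "z \<in> \<Union>\<Q>"
    proof (cases "z \<in> F")
      case True
      then have "z \<notin> G" using assms(4) by blast
      then obtain Q where "closedin X Q \<and> openin X Q \<and> z \<in> Q \<and> Q \<inter> G = {}"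
        using clopen_avoid[OF assms(3) z] by blast
      then show ?thesis unfolding \<Q>_def by blast
    next
      case False
      then obtain Q where "closedin X Q \<and> openin X Q \<and> z \<in> Q \<and> Q \<inter> F = {}"
        using clopen_avoid[OF assms(2) z] by blast
      then show ?thesis unfolding \<Q>_def by blast
    qed
  qed
  have oQ: "\<forall>U\<in>\<Q>. openin X U" unfolding \<Q>_def by blast
  obtain q :: "nat \<Rightarrow> 'a set" where q: "\<forall>n. q n \<in> \<Q>" "topspace X \<subseteq> (\<Union>n. q n)"
    using hL_seq[OF assms(1) oQ cov False] by blast
  have qc: "\<forall>n. closedin X (q n) \<and> openin X (q n)" using q(1) unfolding \<Q>_def by blast
  have qcov: "\<forall>y\<in>topspace X. \<exists>n. y \<in> q n" using q(2) by blast
  define D where "D = {y\<in>topspace X. (\<lambda>m. q m \<inter> G = {}) (LEAST n. y \<in> q n)}"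
  have oD: "openin X D" unfolding D_def by (rule least_index_open[OF qc qcov])
  have "openin X {y\<in>topspace X. (\<lambda>m. \<not> q m \<inter> G = {}) (LEAST n. y \<in> q n)}"
    by (rule least_index_open[OF qc qcov])
  moreover have "{y\<in>topspace X. (\<lambda>m. \<not> q m \<inter> G = {}) (LEAST n. y \<in> q n)} = topspace X - D"
    unfolding D_def by auto
  moreover have "D \<subseteq> topspace X" unfolding D_def by blast
  ultimately have cD: "closedin X D" unfolding closedin_def by simp
  have inq: "y \<in> q (LEAST n. y \<in> q n)" if "y \<in> topspace X" for y
  proof -
    have "\<exists>n. y \<in> q n" using qcov that by blast
    then show ?thesis by (rule LeastI_ex)
  qed
  have "F \<subseteq> D"
  proof
    fix y assume y: "y \<in> F"
    have yt: "y \<in> topspace X" using y C_set_subset[OF assms(2)] by blast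
    have "q (LEAST n. y \<in> q n) \<inter> F \<noteq> {}" using inq[OF yt] y by blast
    moreover have "q (LEAST n. y \<in> q n) \<in> \<Q>" using q(1) by blast
    ultimately have "q (LEAST n. y \<in> q n) \<inter> G = {}" unfolding \<Q>_def by blast
    then show "y \<in> D" unfolding D_def using yt by simp
  qed
  moreover have "D \<inter> G = {}"
  proof (rule ccontr)
    assume "D \<inter> G \<noteq> {}"
    then obtain y where y: "y \<in> D" "y \<in> G" by blast
    then have "y \<in> topspace X" "q (LEAST n. y \<in> q n) \<inter> G = {}" unfolding D_def by auto
    then show False using inq y(2) by blast
  qed
  ultimately show ?thesis using oD cD by blast
qed


lemma closed_sigmaC_sep:
  fixes F :: "nat \<Rightarrow> 'a set"
  assumes hl: "hL X" and az: "almost_zero_dimensional X"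
    and cA: "closedin X A" and FA: "\<forall>n. C_set X (F n)" and AF: "A = (\<Union>n. F n)"
    and x: "x \<in> topspace X" "x \<notin> A"
  shows "\<exists>D. closedin X D \<and> openin X D \<and> A \<subseteq> D \<and> x \<notin> D"
proof -
  define \<U> where "\<U> = {U. openin X U \<and> (\<exists>W. C_set X W \<and> U \<subseteq> W \<and> W \<inter> A = {})}"
  have oU: "\<forall>U\<in>\<U>. openin X U" unfolding \<U>_def by blast
  have oA: "openin X (topspace X - A)" using cA by blast
  have cov: "topspace X - A \<subseteq> \<Union>\<U>"
  proof
    fix y assume y: "y \<in> topspace X - A"
    have "neighbourhood_base_at y (C_set X) X"
      using az y unfolding almost_zero_dimensional_def neighbourhood_base_of_def by blast
    then obtain U V where UV: "openin X U" "C_set X V" "y \<in> U" "U \<subseteq> V" "V \<subseteq> topspace X - A"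
      using oA y unfolding neighbourhood_base_at_def by blast
    then have "U \<in> \<U>" unfolding \<U>_def by blast
    then show "y \<in> \<Union>\<U>" using UV(3) by blast
  qed
  have ne: "topspace X - A \<noteq> {}" using x by blast
  obtain q :: "nat \<Rightarrow> 'a set" where q: "\<forall>n. q n \<in> \<U>" "topspace X - A \<subseteq> (\<Union>n. q n)"
    using hL_seq[OF hl oU cov ne] by blast
  have "\<forall>n. \<exists>W. C_set X W \<and> q n \<subseteq> W \<and> W \<inter> A = {}"
  proof
    fix n have "q n \<in> \<U>" using q(1) by blast
    then show "\<exists>W. C_set X W \<and> q n \<subseteq> W \<and> W \<inter> A = {}" unfolding \<U>_def by blast
  qed
  then obtain W :: "nat \<Rightarrow> 'a set" where W: "\<And>n. C_set X (W n) \<and> q n \<subseteq> W n \<and> W n \<inter> A = {}" by metis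
  have qo: "\<And>n. openin X (q n)" using q(1) oU by blast
  have "\<forall>n i. \<exists>E. closedin X E \<and> openin X E \<and> F n \<subseteq> E \<and> E \<inter> W i = {}"
  proof (intro allI)
    fix n i
    have "F n \<inter> W i = {}" using W[of i] AF by blast
    then show "\<exists>E. closedin X E \<and> openin X E \<and> F n \<subseteq> E \<and> E \<inter> W i = {}"
      using sep_lemma[OF hl FA[rule_format, of n]] W[of i] by blast
  qed
  then obtain E :: "nat \<Rightarrow> nat \<Rightarrow> 'a set" where E: "\<And>n i. closedin X (E n i) \<and> openin X (E n i) \<and> F n \<subseteq> E n i \<and> E n i \<inter> W i = {}"
    by metis
  have "\<forall>n. \<exists>P. closedin X P \<and> openin X P \<and> F n \<subseteq> P \<and> x \<notin> P"
  proof
    fix n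
    have "x \<notin> F n" using x(2) AF by blast
    then obtain Q where Q: "closedin X Q \<and> openin X Q \<and> x \<in> Q \<and> Q \<inter> F n = {}"
      using clopen_avoid[OF FA[rule_format, of n] x(1)] by blast
    have "F n \<subseteq> topspace X" using C_set_subset FA by blast
    then show "\<exists>P. closedin X P \<and> openin X P \<and> F n \<subseteq> P \<and> x \<notin> P"
      using Q by (intro exI[of _ "topspace X - Q"]) (auto intro: openin_diff closedin_diff)
  qed
  then obtain P :: "nat \<Rightarrow> 'a set" where P: "\<And>n. closedin X (P n) \<and> openin X (P n) \<and> F n \<subseteq> P n \<and> x \<notin> P n"
    by metis
  define D where "D = (\<lambda>n. P n \<inter> (topspace X \<inter> \<Inter>((\<lambda>i. E n i) ` {..n})))"
  have Dc: "closedin X (D n) \<and> openin X (D n)" for n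
  proof -
    have h: "closedin X (topspace X \<inter> \<Inter>((\<lambda>i. E n i) ` {..n})) \<and> openin X (topspace X \<inter> \<Inter>((\<lambda>i. E n i) ` {..n}))"
      using E by (intro finite_Inter_clopen) auto
    show ?thesis unfolding D_def using P[of n] h closedin_Int openin_Int by blast
  qed
  have FD: "F n \<subseteq> D n" for n
  proof -
    have "F n \<subseteq> topspace X" using C_set_subset FA by blast
    then show ?thesis unfolding D_def using P[of n] E by blast
  qed
  have xD: "x \<notin> D n" for n unfolding D_def using P[of n] by blast
  have DE: "k \<le> n \<Longrightarrow> D n \<inter> W k = {}" for n k
    unfolding D_def using E[of n k] by auto
  define DD where "DD = (\<Union>n. D n)"
  have oDD: "openin X DD" unfolding DD_def using Dc by blast
  have ADD: "A \<subseteq> DD" unfolding DD_def AF using FD by blast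
  have xDD: "x \<notin> DD" unfolding DD_def using xD by blast
  have DDt: "DD \<subseteq> topspace X" using oDD openin_subset by blast
  have "openin X (topspace X - DD)"
  proof (subst openin_subopen, intro ballI)
    fix y assume y: "y \<in> topspace X - DD"
    then have "y \<in> topspace X - A" using ADD by blast
    then obtain k where k: "y \<in> q k" using q(2) by blast
    define N where "N = q k \<inter> (topspace X \<inter> \<Inter>((\<lambda>j. topspace X - D j) ` {..<k}))"
    have h: "closedin X (topspace X \<inter> \<Inter>((\<lambda>j. topspace X - D j) ` {..<k})) \<and>
        openin X (topspace X \<inter> \<Inter>((\<lambda>j. topspace X - D j) ` {..<k}))"
      using Dc by (intro finite_Inter_clopen) auto
    have oN: "openin X N" unfolding N_def using openin_Int[OF qo[of k] conjunct2[OF h]] .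
    have yN: "y \<in> N" unfolding N_def using y k unfolding DD_def by blast
    have "N \<subseteq> topspace X - DD"
    proof
      fix z assume z: "z \<in> N"
      have zt: "z \<in> topspace X" using z unfolding N_def by blast
      have "z \<notin> D n" for n
      proof (cases "n < k")
        case True
        then have "n \<in> {..<k}" by simp
        then show ?thesis using z unfolding N_def by blast
      next
        case False
        then have "D n \<inter> W k = {}" using DE by simp
        moreover have "z \<in> W k" using z W[of k] unfolding N_def by blast
        ultimately show ?thesis by blast
      qed
      then show "z \<in> topspace X - DD" using zt unfolding DD_def by blast
    qed
    then show "\<exists>T. openin X T \<and> y \<in> T \<and> T \<subseteq> topspace X - DD" using oN yN by blast
  qed
  then have cDD: "closedin X DD" unfolding closedin_def using DDt by simp
  show ?thesis using oDD cDD ADD xDD by blast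
qed

theorem corollary4p5:
  fixes X :: "'a topology"
  assumes "metrizable_space X" and "separable_space X"
    and "almost_zero_dimensional X"
    and "rim_sigmaC X"
  shows "X dim_le 0"
proof -
  have hl: "hL X" using hL_metrizable assms(1,2) by blast
  obtain \<B> where B: "\<forall>B\<in>\<B>. openin X B \<and> sigmaC_set X (X frontier_of B)"
    "\<forall>U. openin X U \<longrightarrow> (\<exists>\<V>. \<V> \<subseteq> \<B> \<and> \<Union>\<V> = U)"
    using assms(4) unfolding rim_sigmaC_def by blast
  show ?thesis unfolding dimension_le_0_neighbourhood_base_of_clopen neighbourhood_base_of
  proof (intro allI impI)
    fix U x assume Ux: "openin X U \<and> x \<in> U"
    obtain \<V> where V: "\<V> \<subseteq> \<B>" "\<Union>\<V> = U" using B(2) Ux by blast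
    then obtain B0 where B0: "B0 \<in> \<B>" "x \<in> B0" "B0 \<subseteq> U" using Ux by blast
    have oB: "openin X B0" using B(1) B0(1) by blast
    have "sigmaC_set X (X frontier_of B0)" using B(1) B0(1) by blast
    then obtain F :: "nat \<Rightarrow> 'a set" where F: "\<forall>n. C_set X (F n)" "X frontier_of B0 = (\<Union>n. F n)"
      unfolding sigmaC_set_def by blast
    have xt: "x \<in> topspace X" using oB B0(2) openin_subset by blast
    have xf: "x \<notin> X frontier_of B0"
      using B0(2) oB unfolding frontier_of_def by (simp add: interior_of_openin)
    obtain D where D: "closedin X D" "openin X D" "X frontier_of B0 \<subseteq> D" "x \<notin> D"
      using closed_sigmaC_sep[OF hl assms(3) closedin_frontier_of F(1) F(2) xt xf] by blast
    define V where "V = B0 - D"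
    have Bt: "B0 \<subseteq> topspace X" using oB openin_subset by blast
    have eq: "V = X closure_of B0 \<inter> (topspace X - D)"
    proof -
      have "X closure_of B0 = B0 \<union> X frontier_of B0"
        using interior_of_union_frontier_of[of X B0] oB by (simp add: interior_of_openin)
      then show ?thesis unfolding V_def using D(3) Bt by blast
    qed
    have oV: "openin X V" unfolding V_def using oB D(1) by (rule openin_diff)
    have cV: "closedin X V" unfolding eq using D(2)
      by (intro closedin_Int closedin_closure_of) (simp add: closedin_diff)
    show "\<exists>U' V'. openin X U' \<and> (closedin X V' \<and> openin X V') \<and> x \<in> U' \<and> U' \<subseteq> V' \<and> V' \<subseteq> U"
      using oV cV B0 D(4) unfolding V_def by blast
  qed
qed

end
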